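(* Let $n$ and $0<n_1<\cdots<n_d<n$ be integers with $m_1=n_1$, $m_k=n_k-n_{k-1}$ ($2\le k\le d$), $m_{d+1}=n-n_d$, and regard $\mathrm{Flag}(n_1,\dots,n_d;n)=\{(VJ_1V^{\mathsf T},\dots,VJ_dV^{\mathsf T}):V\in\mathrm{O}(n)\}$ as a submanifold of $(\mathbb{R}^{n\times n})^d$ with the Frobenius inner product. Let $V(t)$ be a differentiable curve in $\mathrm{O}(n)$, $\Lambda(t)=V(t)^{\mathsf T}\dot V(t)\in\mathfrak{so}(n)$, with $\Lambda(p,p)(t)\equiv0$ for $p=1,\dots,d+1$, let $c(t)=V(t)(J_1,\dots,J_d)V(t)^{\mathsf T}$ and \[ T_3(t)=V(t)\big(\Lambda(t)J_1\Lambda(t),\dots,\Lambda(t)J_d\Lambda(t)\big)V(t)^{\mathsf T}. \] Then the orthogonal projection of $T_3(t)$ onto $\mathbb{T}_{c(t)}\mathrm{Flag}(n_1,\dots,n_d;n)$ equals $V(t)(X_1,\dots,X_d)V(t)^{\mathsf T}$, where each $X_k$ is a symmetric matrix whose $(p,q)$ block vanishes for every $(p,q)$ other than $(k,d+1)$ and $(d+1,k)$. Moreover, writing $\Lambda(t)=\begin{bmatrix}\Lambda_0(t)&\Lambda_1(t)\\-\Lambda_1(t)^{\mathsf T}&0\end{bmatrix}$ with $\Lambda_0(t)\in\mathfrak{so}(n-m_{d+1})$ and $\Lambda_1(t)\in\mathbb{R}^{(n-m_{d+1})\times m_{d+1}}$, one has \[ \begin{bmatrix}X_1(1,d+1)\\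 \vdots\\ X_d(d,d+1)\end{bmatrix}=-\Lambda_0(t)\Lambda_1(t). \]
   Context: $J_k=\operatorname{diag}(-I_{m_1},\dots,-I_{m_{k-1}},I_{m_k},-I_{m_{k+1}},\dots,-I_{m_{d+1}})$. $V(X_1,\dots,X_d)V^{\mathsf T}$ denotes $(VX_1V^{\mathsf T},\dots,VX_dV^{\mathsf T})$. For an $n\times n$ matrix $M$, $M(p,q)$ denotes its $(p,q)$ block in the partition $n=m_1+\cdots+m_{d+1}$. *)

theory Defs
  imports Complex_Main
begin

text \<open>Matrices of size n x n are represented as functions nat => nat => real,
  only entries with indices below n being meaningful; products are
  restricted so that results vanish outside the n x n range.
  Tuples in (R^{n x n})^d are functions nat => mat indexed by k in {1..d}.\<close>

type_synonym mat = "nat \<Rightarrow> nat \<Rightarrow> real"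
type_synonym mtuple = "nat \<Rightarrow> mat"

definition in_mat :: "nat \<Rightarrow> mat \<Rightarrow> bool" where
  "in_mat n A \<longleftrightarrow> (\<forall>i j. (n \<le> i \<or> n \<le> j) \<longrightarrow> A i j = 0)"

definition mmul :: "nat \<Rightarrow> mat \<Rightarrow> mat \<Rightarrow> mat" where
  "mmul n A B = (\<lambda>i j. if i < n \<and> j < n then (\<Sum>l<n. A i l * B l j) else 0)"

definition mtr :: "mat \<Rightarrow> mat" where
  "mtr A = (\<lambda>i j. A j i)"

definition idm :: "nat \<Rightarrow> mat" where
  "idm n = (\<lambda>i j. if i < n \<and> j < n \<and> i = j then 1 else 0)"

definition orth :: "nat \<Rightarrow> mat set" where
  "orth n = {V. in_mat n V \<and> mmul n (mtr V) V = idm n}"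

text \<open>Block boundaries: n_0 = 0, n_k for 1<=k<=d, n_{d+1} = n.
  Block p (1<=p<=d+1) consists of the indices n_{p-1} .. n_p - 1.\<close>
definition bd :: "nat \<Rightarrow> (nat \<Rightarrow> nat) \<Rightarrow> nat \<Rightarrow> nat \<Rightarrow> nat" where
  "bd n ns d k = (if k = 0 then 0 else if k \<le> d then ns k else n)"

definition blk :: "nat \<Rightarrow> (nat \<Rightarrow> nat) \<Rightarrow> nat \<Rightarrow> nat \<Rightarrow> nat set" where
  "blk n ns d p = {bd n ns d (p - 1) ..< bd n ns d p}"

definition Jm :: "nat \<Rightarrow> (nat \<Rightarrow> nat) \<Rightarrow> nat \<Rightarrow> nat \<Rightarrow> mat" where
  "Jm n ns d k = (\<lambda>i j. if i < n \<and> j < n \<and> i = j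
      then (if i \<in> blk n ns d k then 1 else -1) else 0)"

definition conjm :: "nat \<Rightarrow> mat \<Rightarrow> mat \<Rightarrow> mat" where
  "conjm n V A = mmul n (mmul n V A) (mtr V)"

definition conjt :: "nat \<Rightarrow> nat \<Rightarrow> mat \<Rightarrow> mtuple \<Rightarrow> mtuple" where
  "conjt n d V X = (\<lambda>k. if 1 \<le> k \<and> k \<le> d then conjm n V (X k) else (\<lambda>i j. 0))"

definition flag :: "nat \<Rightarrow> (nat \<Rightarrow> nat) \<Rightarrow> nat \<Rightarrow> mtuple set" where
  "flag n ns d = {conjt n d V (Jm n ns d) | V. V \<in> orth n}"

definition finner :: "nat \<Rightarrow> nat \<Rightarrow> mtuple \<Rightarrow> mtuple \<Rightarrow> real" where
  "finner n d X Y = (\<Sum>k\<in>{1..d}. \<Sum>i<n. \<Sum>j<n. X k i j * Y k i j)"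

definition tangent_space :: "mtuple set \<Rightarrow> mtuple \<Rightarrow> mtuple set" where
  "tangent_space M c = {D. \<exists>\<gamma> e. e > 0 \<and> (\<forall>s. \<bar>s\<bar> < e \<longrightarrow> \<gamma> s \<in> M) \<and> \<gamma> 0 = c \<and>
      (\<forall>k i j. ((\<lambda>s. \<gamma> s k i j) has_real_derivative D k i j) (at 0))}"

definition is_orth_proj :: "nat \<Rightarrow> nat \<Rightarrow> mtuple set \<Rightarrow> mtuple \<Rightarrow> mtuple \<Rightarrow> bool" where
  "is_orth_proj n d T x P \<longleftrightarrow> P \<in> T \<and> (\<forall>W\<in>T. finner n d (\<lambda>k i j. x k i j - P k i j) W = 0)"

end

theory Submission
  imports Defs
begin

definition good :: "nat \<Rightarrow> (nat \<Rightarrow> nat) \<Rightarrow> nat \<Rightarrow> bool" where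
  "good n ns d \<longleftrightarrow> 1 \<le> d \<and> 0 < ns 1 \<and> (\<forall>k. 1 \<le> k \<and> k < d \<longrightarrow> ns k < ns (Suc k)) \<and> ns d < n"

lemma bd_Suc: assumes "good n ns d" "p \<le> d" shows "bd n ns d p < bd n ns d (Suc p)"
  using assms by (cases "p = d") (auto simp: good_def bd_def)

lemma bd_mono: assumes "good n ns d" "p < q" "q \<le> d + 1" shows "bd n ns d p < bd n ns d q"
  using assms(2,3)
proof (induction q)
  case 0 then show ?case by simp
next
  case (Suc q)
  show ?case
  proof (cases "p = q")
    case True then show ?thesis using bd_Suc[OF assms(1)] Suc by simp
  next
    case False
    then have "bd n ns d p < bd n ns d q" using Suc by simp
    also have "\<dots> < bd n ns d (Suc q)" using bd_Suc[OF assms(1)] Suc by simp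
    finally show ?thesis .
  qed
qed

lemma bd_mono_le: assumes "good n ns d" "p \<le> q" "q \<le> d + 1" shows "bd n ns d p \<le> bd n ns d q"
  using bd_mono[OF assms(1), of p q] assms by (cases "p = q") auto

lemma blk_unique:
  assumes "good n ns d" "1 \<le> p" "p \<le> d + 1" "1 \<le> q" "q \<le> d + 1" "i \<in> blk n ns d p" "i \<in> blk n ns d q"
  shows "p = q"
proof (rule ccontr)
  assume "p \<noteq> q"
  then consider "p < q" | "q < p" by linarith
  then show False
  proof cases
    case 1
    then have "bd n ns d p \<le> bd n ns d (q - 1)" using assms by (intro bd_mono_le) auto
    then show False using assms(6,7) by (simp add: blk_def)
  next
    case 2
    then have "bd n ns d q \<le> bd n ns d (p - 1)" using assms by (intro bd_mono_le) auto
    then show False using assms(6,7) by (simp add: blk_def)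
  qed
qed

lemma blk_lt: assumes "good n ns d" "p \<le> d + 1" "i \<in> blk n ns d p" shows "i < n"
proof -
  have "bd n ns d p \<le> bd n ns d (d + 1)" using assms by (intro bd_mono_le) auto
  moreover have "bd n ns d (d + 1) = n" by (simp add: bd_def)
  ultimately show ?thesis using assms(3) by (simp add: blk_def)
qed

lemma blk_last: assumes "good n ns d" shows "i \<in> blk n ns d (d + 1) \<longleftrightarrow> ns d \<le> i \<and> i < n"
  using assms by (auto simp: blk_def bd_def good_def)

lemma blk_low: assumes "good n ns d" "1 \<le> k" "k \<le> d" "i \<in> blk n ns d k" shows "i < ns d"
proof -
  have "bd n ns d k \<le> bd n ns d d" using assms by (intro bd_mono_le) auto
  moreover have "bd n ns d d = ns d" using assms by (simp add: bd_def)
  ultimately show ?thesis using assms(4) by (simp add: blk_def)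
qed

lemma blk_ex: assumes "good n ns d" "i < n" shows "\<exists>p. 1 \<le> p \<and> p \<le> d + 1 \<and> i \<in> blk n ns d p"
proof -
  define p where "p = (LEAST p. i < bd n ns d p)"
  have ex: "i < bd n ns d (d + 1)" using assms by (simp add: bd_def)
  then have ip: "i < bd n ns d p" unfolding p_def by (rule LeastI)
  have "p \<le> d + 1" unfolding p_def using ex by (rule Least_le)
  moreover have "p \<noteq> 0" using ip by (cases "p = 0") (simp_all add: bd_def)
  moreover have "\<not> i < bd n ns d (p - 1)"
  proof
    assume "i < bd n ns d (p - 1)"
    then have "(LEAST p. i < bd n ns d p) \<le> p - 1" by (rule Least_le)
    then have "p \<le> p - 1" unfolding p_def .
    then show False using \<open>p \<noteq> 0\<close> by simp
  qed
  ultimately show ?thesis using ip by (intro exI[of _ p]) (auto simp: blk_def)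
qed

lemma blk_ex_low: assumes "good n ns d" "i < ns d" shows "\<exists>k. 1 \<le> k \<and> k \<le> d \<and> i \<in> blk n ns d k"
proof -
  have "i < n" using assms unfolding good_def by linarith
  then obtain p where p: "1 \<le> p" "p \<le> d + 1" "i \<in> blk n ns d p" using blk_ex[OF assms(1)] by blast
  have "p \<noteq> d + 1"
  proof
    assume "p = d + 1"
    then have "ns d \<le> i" using p(3) blk_last[OF assms(1), of i] by simp
    then show False using assms(2) by simp
  qed
  then show ?thesis using p by (intro exI[of _ p]) auto
qed

definition trn :: "nat \<Rightarrow> mat \<Rightarrow> mat" where
  "trn n A = (\<lambda>i j. if i < n \<and> j < n then A i j else 0)"

lemma mmul_assoc: "mmul n (mmul n A B) C = mmul n A (mmul n B C)"
proof (intro ext)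
  fix i j
  show "mmul n (mmul n A B) C i j = mmul n A (mmul n B C) i j"
  proof (cases "i < n \<and> j < n")
    case True
    have "(\<Sum>m<n. (\<Sum>l<n. A i l * B l m) * C m j) = (\<Sum>m<n. \<Sum>l<n. A i l * B l m * C m j)"
      by (simp add: sum_distrib_right)
    also have "\<dots> = (\<Sum>l<n. \<Sum>m<n. A i l * B l m * C m j)" by (rule sum.swap)
    also have "\<dots> = (\<Sum>l<n. A i l * (\<Sum>m<n. B l m * C m j))"
      by (simp add: sum_distrib_left mult.assoc)
    moreover have "mmul n (mmul n A B) C i j = (\<Sum>m<n. (\<Sum>l<n. A i l * B l m) * C m j)"
      using True by (simp add: mmul_def[of n "mmul n A B"]) (intro sum.cong, auto simp: mmul_def)
    moreover have "mmul n A (mmul n B C) i j = (\<Sum>l<n. A i l * (\<Sum>m<n. B l m * C m j))"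
      using True by (simp add: mmul_def[of n A]) (intro sum.cong, auto simp: mmul_def)
    ultimately show ?thesis by simp
  qed (auto simp: mmul_def)
qed

lemma mmul_trn_left[simp]: "mmul n (trn n A) B = mmul n A B"
  by (intro ext) (simp add: mmul_def trn_def)

lemma mmul_trn_right[simp]: "mmul n A (trn n B) = mmul n A B"
  by (intro ext) (simp add: mmul_def trn_def)

lemma trn_mmul[simp]: "trn n (mmul n A B) = mmul n A B"
  by (intro ext) (simp add: mmul_def trn_def)

lemma mtr_mmul: "mtr (mmul n A B) = mmul n (mtr B) (mtr A)"
  by (intro ext) (simp add: mmul_def mtr_def mult.commute)

lemma mtr_mtr[simp]: "mtr (mtr A) = A"
  by (simp add: mtr_def)

lemma mtr_trn[simp]: "mtr (trn n A) = trn n (mtr A)"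
  by (intro ext) (simp add: mtr_def trn_def)

lemma mmul_idm_left[simp]: "mmul n (idm n) A = trn n A"
proof (intro ext)
  fix i j
  show "mmul n (idm n) A i j = trn n A i j"
  proof (cases "i < n \<and> j < n")
    case True
    have "(\<Sum>l<n. idm n i l * A l j) = (\<Sum>l<n. if l = i then A i j else 0)"
      using True by (intro sum.cong) (auto simp: idm_def)
    then show ?thesis using True by (simp add: mmul_def trn_def)
  qed (auto simp: mmul_def trn_def)
qed

lemma mmul_idm_right[simp]: "mmul n A (idm n) = trn n A"
proof (intro ext)
  fix i j
  show "mmul n A (idm n) i j = trn n A i j"
  proof (cases "i < n \<and> j < n")
    case True
    have "(\<Sum>l<n. A i l * idm n l j) = (\<Sum>l<n. if l = j then A i j else 0)"
      using True by (intro sum.cong) (auto simp: idm_def)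
    then show ?thesis using True by (simp add: mmul_def trn_def)
  qed (auto simp: mmul_def trn_def)
qed

lemma trn_in_mat: "in_mat n A \<Longrightarrow> trn n A = A"
  by (intro ext) (auto simp: trn_def in_mat_def)

lemma orth_cancel: "V \<in> orth n \<Longrightarrow> mmul n (mtr V) (mmul n V X) = trn n X"
  by (simp add: mmul_assoc[symmetric] orth_def)

lemma orth_cancel0: "V \<in> orth n \<Longrightarrow> mmul n (mtr V) V = idm n"
  by (simp add: orth_def)

lemma mmul_add_left: "mmul n (\<lambda>i j. A i j + B i j) C = (\<lambda>i j. mmul n A C i j + mmul n B C i j)"
  by (intro ext) (simp add: mmul_def distrib_right sum.distrib)

lemma mmul_add_right: "mmul n C (\<lambda>i j. A i j + B i j) = (\<lambda>i j. mmul n C A i j + mmul n C B i j)"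
  by (intro ext) (simp add: mmul_def distrib_left sum.distrib)

lemma mmul_cong_left: "(\<And>i j. i < n \<Longrightarrow> j < n \<Longrightarrow> A i j = B i j) \<Longrightarrow> mmul n A C = mmul n B C"
  by (intro ext) (simp add: mmul_def)

lemma mmul_cong_right: "(\<And>i j. i < n \<Longrightarrow> j < n \<Longrightarrow> A i j = B i j) \<Longrightarrow> mmul n C A = mmul n C B"
  by (intro ext) (simp add: mmul_def)

lemma in_mat_mmul: "in_mat n (mmul n A B)"
  by (simp add: in_mat_def mmul_def)

lemma in_mat_idm: "in_mat n (idm n)"
  by (simp add: in_mat_def idm_def)

lemma orth_mmul: "V \<in> orth n \<Longrightarrow> Q \<in> orth n \<Longrightarrow> mmul n V Q \<in> orth n"
  by (simp add: orth_def in_mat_mmul mtr_mmul mmul_assoc orth_cancel)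

definition mdv :: "nat \<Rightarrow> (real \<Rightarrow> mat) \<Rightarrow> mat \<Rightarrow> real \<Rightarrow> bool" where
  "mdv n A A' x \<longleftrightarrow> (\<forall>i j. i < n \<and> j < n \<longrightarrow> ((\<lambda>s. A s i j) has_real_derivative A' i j) (at x))"

lemma DERIV_mult2:
  "(f has_real_derivative D) (at x within S) \<Longrightarrow> (g has_real_derivative E) (at x within S) \<Longrightarrow>
    ((\<lambda>x. f x * g x) has_real_derivative D * g x + f x * E) (at x within S)"
  using DERIV_mult'[of f D x S g E] by (simp add: add.commute)

lemma mdv_mmul:
  assumes "mdv n A A' x" "mdv n B B' x"
  shows "mdv n (\<lambda>s. mmul n (A s) (B s)) (\<lambda>i j. mmul n A' (B x) i j + mmul n (A x) B' i j) x"
  unfolding mdv_def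
proof (intro allI impI)
  fix i j assume ij: "i < n \<and> j < n"
  have "((\<lambda>s. \<Sum>l<n. A s i l * B s l j) has_real_derivative
          (\<Sum>l<n. A' i l * B x l j + A x i l * B' l j)) (at x)"
    using assms ij unfolding mdv_def by (intro DERIV_sum DERIV_mult2) auto
  then show "((\<lambda>s. mmul n (A s) (B s) i j) has_real_derivative
      mmul n A' (B x) i j + mmul n (A x) B' i j) (at x)"
    using ij by (simp add: mmul_def sum.distrib)
qed

lemma mdv_const: "mdv n (\<lambda>s. C) (\<lambda>i j. 0) x"
  by (simp add: mdv_def)

lemma mdv_mtr: "mdv n A A' x \<Longrightarrow> mdv n (\<lambda>s. mtr (A s)) (mtr A') x"
  by (simp add: mdv_def mtr_def)

definition eps :: "nat \<Rightarrow> (nat \<Rightarrow> nat) \<Rightarrow> nat \<Rightarrow> nat \<Rightarrow> nat \<Rightarrow> real" where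
  "eps n ns d k i = (if i \<in> blk n ns d k then 1 else -1)"

lemma eps_sq[simp]: "eps n ns d k i * eps n ns d k i = 1"
  by (simp add: eps_def)

lemma Jm_eps: "Jm n ns d k i j = (if i < n \<and> j < n \<and> i = j then eps n ns d k i else 0)"
  by (simp add: Jm_def eps_def)

lemma mmul_J_right: "mmul n A (Jm n ns d k) i j = (if i < n \<and> j < n then A i j * eps n ns d k j else 0)"
proof (cases "i < n \<and> j < n")
  case True
  have "(\<Sum>l<n. A i l * Jm n ns d k l j) = (\<Sum>l<n. if l = j then A i j * eps n ns d k j else 0)"
    using True by (intro sum.cong) (auto simp: Jm_eps)
  then show ?thesis using True by (simp add: mmul_def)
qed (auto simp: mmul_def)

lemma mmul_J_left: "mmul n (Jm n ns d k) A i j = (if i < n \<and> j < n then eps n ns d k i * A i j else 0)"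
proof (cases "i < n \<and> j < n")
  case True
  have "(\<Sum>l<n. Jm n ns d k i l * A l j) = (\<Sum>l<n. if l = i then eps n ns d k i * A i j else 0)"
    using True by (intro sum.cong) (auto simp: Jm_eps)
  then show ?thesis using True by (simp add: mmul_def)
qed (auto simp: mmul_def)

lemma in_mat_J: "in_mat n (Jm n ns d k)"
  by (simp add: in_mat_def Jm_def)

lemma trn_J[simp]: "trn n (Jm n ns d k) = Jm n ns d k"
  by (rule trn_in_mat[OF in_mat_J])

lemma JJ: "mmul n (Jm n ns d k) (Jm n ns d l) = (\<lambda>i j. if i < n \<and> j < n \<and> i = j then eps n ns d k i * eps n ns d l i else 0)"
  by (intro ext) (simp add: mmul_J_left Jm_eps)

lemma JJ_comm: "mmul n (Jm n ns d k) (Jm n ns d l) = mmul n (Jm n ns d l) (Jm n ns d k)"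
  unfolding JJ by (intro ext) (simp add: mult.commute)

lemma JJJ: "mmul n (mmul n (Jm n ns d k) (Jm n ns d k)) (Jm n ns d k) = Jm n ns d k"
  by (intro ext) (simp add: JJ mmul_J_right Jm_eps)

lemma conj_prod: "W \<in> orth n \<Longrightarrow> mmul n (conjm n W A) (conjm n W B) = conjm n W (mmul n A B)"
  by (simp add: conjm_def mmul_assoc orth_cancel)

lemma flag_rel:
  assumes "G \<in> flag n ns d" "1 \<le> k" "k \<le> d" "1 \<le> l" "l \<le> d"
  shows "mmul n (mmul n (G k) (G k)) (G k) = G k"
    and "mmul n (G k) (G l) = mmul n (G l) (G k)"
proof -
  obtain W where W: "W \<in> orth n" "G = conjt n d W (Jm n ns d)" using assms(1) by (auto simp: flag_def)
  show "mmul n (mmul n (G k) (G k)) (G k) = G k"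
    using assms W by (simp add: conjt_def conj_prod JJJ)
  show "mmul n (G k) (G l) = mmul n (G l) (G k)"
    using assms W by (simp add: conjt_def conj_prod JJ_comm[of n ns d k l])
qed

lemma mdv_unique_near:
  assumes "mdv n A A' 0" "mdv n B B' 0" "e > 0" "\<forall>s. \<bar>s\<bar> < e \<longrightarrow> A s = B s" "i < n" "j < n"
  shows "A' i j = B' i j"
proof -
  have ev: "eventually (\<lambda>s. A s i j = B s i j) (nhds 0)"
    unfolding eventually_nhds_metric using assms(3,4) by (auto simp: dist_real_def)
  have "((\<lambda>s. A s i j) has_real_derivative A' i j) (at 0)" using assms(1,5,6) by (simp add: mdv_def)
  then have "((\<lambda>s. B s i j) has_real_derivative A' i j) (at 0)"
    using DERIV_cong_ev[OF refl ev refl] by simp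
  moreover have "((\<lambda>s. B s i j) has_real_derivative B' i j) (at 0)" using assms(2,5,6) by (simp add: mdv_def)
  ultimately show ?thesis by (rule DERIV_unique)
qed

lemma tangent_rel:
  assumes V0: "V0 \<in> orth n"
    and Dt: "D \<in> tangent_space (flag n ns d) (conjt n d V0 (Jm n ns d))"
    and k: "1 \<le> k" "k \<le> d" and l: "1 \<le> l" "l \<le> d" and ij: "i < n" "j < n"
  shows "(1 + eps n ns d k i * eps n ns d k j) * mmul n (mtr V0) (mmul n (D k) V0) i j = 0"
    and "mmul n (mtr V0) (mmul n (D k) V0) i j * eps n ns d l j + eps n ns d k i * mmul n (mtr V0) (mmul n (D l) V0) i j
       = mmul n (mtr V0) (mmul n (D l) V0) i j * eps n ns d k j + eps n ns d l i * mmul n (mtr V0) (mmul n (D k) V0) i j"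
proof -
  let ?J = "Jm n ns d"
  define E where "E = (\<lambda>k. mmul n (mtr V0) (mmul n (D k) V0))"
  obtain \<gamma> e where e: "e > 0" and inflag: "\<forall>s. \<bar>s\<bar> < e \<longrightarrow> \<gamma> s \<in> flag n ns d"
    and g0: "\<gamma> 0 = conjt n d V0 ?J"
    and gd: "\<forall>k i j. ((\<lambda>s. \<gamma> s k i j) has_real_derivative D k i j) (at 0)"
    using Dt unfolding tangent_space_def by blast
  have dG: "mdv n (\<lambda>s. \<gamma> s q) (D q) 0" for q using gd by (simp add: mdv_def)
  have c: "\<gamma> 0 q = conjm n V0 (?J q)" if "1 \<le> q" "q \<le> d" for q
    using that g0 by (simp add: conjt_def)
  have d3: "mdv n (\<lambda>s. mmul n (mmul n (\<gamma> s k) (\<gamma> s k)) (\<gamma> s k))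
      (\<lambda>i j. mmul n (\<lambda>i j. mmul n (D k) (\<gamma> 0 k) i j + mmul n (\<gamma> 0 k) (D k) i j) (\<gamma> 0 k) i j
           + mmul n (mmul n (\<gamma> 0 k) (\<gamma> 0 k)) (D k) i j) 0"
    using mdv_mmul[OF mdv_mmul[OF dG[of k] dG[of k]] dG[of k]] by simp
  have eq3: "\<forall>s. \<bar>s\<bar> < e \<longrightarrow> mmul n (mmul n (\<gamma> s k) (\<gamma> s k)) (\<gamma> s k) = \<gamma> s k"
    using inflag flag_rel(1) k by blast
  have M3: "mmul n (\<lambda>i j. mmul n (D k) (\<gamma> 0 k) i j + mmul n (\<gamma> 0 k) (D k) i j) (\<gamma> 0 k) a b
           + mmul n (mmul n (\<gamma> 0 k) (\<gamma> 0 k)) (D k) a b = D k a b" if "a < n" "b < n" for a b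
    using mdv_unique_near[OF d3 dG[of k] e eq3 that] .
  have "mmul n (mtr V0) (mmul n (\<lambda>a b. mmul n (\<lambda>i j. mmul n (D k) (\<gamma> 0 k) i j + mmul n (\<gamma> 0 k) (D k) i j) (\<gamma> 0 k) a b
           + mmul n (mmul n (\<gamma> 0 k) (\<gamma> 0 k)) (D k) a b) V0) = E k"
    unfolding E_def by (subst mmul_cong_left[OF M3]) auto
  then have "(\<lambda>a b. mmul n (mmul n (E k) (?J k)) (?J k) a b + mmul n (mmul n (?J k) (E k)) (?J k) a b
       + mmul n (?J k) (mmul n (?J k) (E k)) a b) = E k"
    using V0 k by (simp add: c E_def conjm_def mmul_add_left mmul_add_right mmul_assoc orth_cancel orth_cancel0)
  then have "mmul n (mmul n (E k) (?J k)) (?J k) i j + mmul n (mmul n (?J k) (E k)) (?J k) i j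
       + mmul n (?J k) (mmul n (?J k) (E k)) i j = E k i j"
    by (rule fun_cong[OF fun_cong[OF _, of _ _ i], of _ _ j, simplified])
  then show "(1 + eps n ns d k i * eps n ns d k j) * mmul n (mtr V0) (mmul n (D k) V0) i j = 0"
    using ij by (simp add: mmul_J_left mmul_J_right E_def) (simp add: eps_def split: if_splits)
  show "mmul n (mtr V0) (mmul n (D k) V0) i j * eps n ns d l j + eps n ns d k i * mmul n (mtr V0) (mmul n (D l) V0) i j
       = mmul n (mtr V0) (mmul n (D l) V0) i j * eps n ns d k j + eps n ns d l i * mmul n (mtr V0) (mmul n (D k) V0) i j"
  proof -
    have d2: "mdv n (\<lambda>s. mmul n (\<gamma> s k) (\<gamma> s l))
      (\<lambda>i j. mmul n (D k) (\<gamma> 0 l) i j + mmul n (\<gamma> 0 k) (D l) i j) 0"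
      using mdv_mmul[OF dG[of k] dG[of l]] by simp
    have d2': "mdv n (\<lambda>s. mmul n (\<gamma> s l) (\<gamma> s k))
      (\<lambda>i j. mmul n (D l) (\<gamma> 0 k) i j + mmul n (\<gamma> 0 l) (D k) i j) 0"
      using mdv_mmul[OF dG[of l] dG[of k]] by simp
    have eq2: "\<forall>s. \<bar>s\<bar> < e \<longrightarrow> mmul n (\<gamma> s k) (\<gamma> s l) = mmul n (\<gamma> s l) (\<gamma> s k)"
      using inflag flag_rel(2) k l by blast
    have M2: "mmul n (D k) (\<gamma> 0 l) a b + mmul n (\<gamma> 0 k) (D l) a b
        = mmul n (D l) (\<gamma> 0 k) a b + mmul n (\<gamma> 0 l) (D k) a b" if "a < n" "b < n" for a b
      using mdv_unique_near[OF d2 d2' e eq2 that] .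
    have "mmul n (mtr V0) (mmul n (\<lambda>a b. mmul n (D k) (\<gamma> 0 l) a b + mmul n (\<gamma> 0 k) (D l) a b) V0)
        = mmul n (mtr V0) (mmul n (\<lambda>a b. mmul n (D l) (\<gamma> 0 k) a b + mmul n (\<gamma> 0 l) (D k) a b) V0)"
      by (subst mmul_cong_left[OF M2]) auto
    then have "(\<lambda>a b. mmul n (E k) (?J l) a b + mmul n (?J k) (E l) a b)
        = (\<lambda>a b. mmul n (E l) (?J k) a b + mmul n (?J l) (E k) a b)"
      using V0 k l by (simp add: c E_def conjm_def mmul_add_left mmul_add_right mmul_assoc orth_cancel orth_cancel0)
    then have "mmul n (E k) (?J l) i j + mmul n (?J k) (E l) i j = mmul n (E l) (?J k) i j + mmul n (?J l) (E k) i j"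
      by (rule fun_cong[OF fun_cong[OF _, of _ _ i], of _ _ j, simplified])
    then show ?thesis using ij by (simp add: mmul_J_left mmul_J_right E_def mult.commute)
  qed
qed

primrec mpw :: "nat \<Rightarrow> mat \<Rightarrow> nat \<Rightarrow> mat" where
  "mpw n W 0 = idm n"
| "mpw n W (Suc k) = mmul n W (mpw n W k)"

lemma mpw_bound:
  "\<bar>mpw n W k i j\<bar> \<le> (\<Sum>a<n. \<Sum>b<n. \<bar>W a b\<bar>) ^ k"
proof (induction k arbitrary: i j)
  case 0 then show ?case by (simp add: idm_def)
next
  case (Suc k)
  let ?M = "(\<Sum>a<n. \<Sum>b<n. \<bar>W a b\<bar>)"
  show ?case
  proof (cases "i < n \<and> j < n")
    case True
    have "\<bar>mpw n W (Suc k) i j\<bar> = \<bar>\<Sum>l<n. W i l * mpw n W k l j\<bar>"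
      using True by (simp add: mmul_def)
    also have "\<dots> \<le> (\<Sum>l<n. \<bar>W i l\<bar> * ?M ^ k)"
      by (rule order_trans[OF sum_abs]) (auto intro!: sum_mono simp: abs_mult intro: mult_left_mono Suc.IH)
    also have "\<dots> = (\<Sum>l<n. \<bar>W i l\<bar>) * ?M ^ k" by (simp add: sum_distrib_right)
    also have "(\<Sum>l<n. \<bar>W i l\<bar>) \<le> ?M"
      using True by (intro member_le_sum) auto
    hence "(\<Sum>l<n. \<bar>W i l\<bar>) * ?M ^ k \<le> ?M * ?M ^ k"
      by (intro mult_right_mono zero_le_power sum_nonneg) auto
    finally show ?thesis by simp
  next
    case False then show ?thesis by (auto simp: mmul_def intro!: mult_nonneg_nonneg zero_le_power sum_nonneg)
  qed
qed

definition mexp :: "nat \<Rightarrow> mat \<Rightarrow> real \<Rightarrow> mat" where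
  "mexp n W s = (\<lambda>i j. (\<Sum>k. (mpw n W k i j / fact k) * s ^ k))"

lemma mexp_summable: "summable (\<lambda>k. (mpw n W k i j / fact k) * y ^ k)"
proof -
  let ?M = "(\<Sum>a<n. \<Sum>b<n. \<bar>W a b\<bar>)"
  have "summable (\<lambda>k. inverse (fact k) * (?M * \<bar>y\<bar>) ^ k)" by (rule summable_exp)
  moreover have "norm ((mpw n W k i j / fact k) * y ^ k) \<le> inverse (fact k) * (?M * \<bar>y\<bar>) ^ k" for k
  proof -
    have "norm ((mpw n W k i j / fact k) * y ^ k) = inverse (fact k) * (\<bar>mpw n W k i j\<bar> * \<bar>y\<bar> ^ k)"
      by (simp add: abs_mult power_abs divide_inverse mult_ac)
    also have "\<dots> \<le> inverse (fact k) * (?M ^ k * \<bar>y\<bar> ^ k)"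
      by (intro mult_left_mono mult_right_mono mpw_bound) auto
    finally show ?thesis by (simp add: power_mult_distrib)
  qed
  ultimately show ?thesis by (rule summable_comparison_test'[where N=0])
qed

lemma mexp_deriv:
  assumes "i < n" "j < n"
  shows "((\<lambda>s. mexp n W s i j) has_real_derivative (\<Sum>l<n. W i l * mexp n W s l j)) (at s)"
proof -
  let ?c = "\<lambda>k. mpw n W k i j / fact k"
  have d: "((\<lambda>s. \<Sum>k. ?c k * s ^ k) has_real_derivative (\<Sum>k. diffs ?c k * s ^ k)) (at s)"
    by (rule termdiffs_strong_converges_everywhere) (rule mexp_summable)
  have "diffs ?c k * s ^ k = (\<Sum>l<n. W i l * (mpw n W k l j / fact k * s ^ k))" for k
  proof -
    have "diffs ?c k = mpw n W (Suc k) i j / fact k"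
      by (simp add: diffs_def fact_Suc field_simps del: of_nat_Suc)
    also have "\<dots> = (\<Sum>l<n. W i l * mpw n W k l j) / fact k"
      using assms by (simp add: mmul_def)
    finally show ?thesis by (simp add: sum_distrib_left sum_distrib_right sum_divide_distrib mult.assoc mult.left_commute)
  qed
  hence "(\<Sum>k. diffs ?c k * s ^ k) = (\<Sum>k. \<Sum>l<n. W i l * (mpw n W k l j / fact k * s ^ k))"
    by simp
  also have "\<dots> = (\<Sum>l<n. \<Sum>k. W i l * (mpw n W k l j / fact k * s ^ k))"
    by (rule suminf_sum) (intro summable_mult mexp_summable)
  also have "\<dots> = (\<Sum>l<n. W i l * mexp n W s l j)"
    unfolding mexp_def by (intro sum.cong refl suminf_mult mexp_summable)
  finally show ?thesis using d by (simp add: mexp_def)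
qed

lemma mexp_zero: "mexp n W 0 = idm n"
  by (rule ext)+ (simp only: mexp_def powser_zero, simp)

lemma mexp_in_mat: "in_mat n (mexp n W s)"
proof -
  have "mpw n W k i j = 0" if "n \<le> i \<or> n \<le> j" for k i j
    using that by (cases k) (auto simp: idm_def mmul_def)
  thus ?thesis by (simp add: in_mat_def mexp_def)
qed

lemma mexp_orth:
  assumes skew: "\<forall>i j. i < n \<and> j < n \<longrightarrow> W j i = - W i j"
  shows "mexp n W s \<in> orth n"
proof -
  let ?Q = "mexp n W"
  have F: "(\<Sum>l<n. ?Q s l a * ?Q s l b) = (\<Sum>l<n. ?Q 0 l a * ?Q 0 l b)" if ab: "a < n" "b < n" for a b
  proof -
   have D: "\<forall>x. ((\<lambda>s. \<Sum>l<n. ?Q s l a * ?Q s l b) has_real_derivative 0) (at x)"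
   proof
    fix x
    have "((\<lambda>s. \<Sum>l<n. ?Q s l a * ?Q s l b) has_real_derivative
       (\<Sum>l<n. (\<Sum>m<n. W l m * ?Q x m a) * ?Q x l b + ?Q x l a * (\<Sum>m<n. W l m * ?Q x m b))) (at x)"
      using ab by (intro DERIV_sum DERIV_mult2 mexp_deriv) auto
    moreover have "(\<Sum>l<n. (\<Sum>m<n. W l m * ?Q x m a) * ?Q x l b + ?Q x l a * (\<Sum>m<n. W l m * ?Q x m b)) = 0"
    proof -
      have "(\<Sum>l<n. ?Q x l a * (\<Sum>m<n. W l m * ?Q x m b)) = (\<Sum>l<n. \<Sum>m<n. ?Q x l a * W l m * ?Q x m b)"
        by (simp add: sum_distrib_left mult_ac)
      also have "\<dots> = (\<Sum>m<n. \<Sum>l<n. ?Q x l a * W l m * ?Q x m b)" by (rule sum.swap)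
      also have "\<dots> = (\<Sum>m<n. \<Sum>l<n. - (W m l * ?Q x l a * ?Q x m b))"
      proof (intro sum.cong refl)
        fix m l assume lm: "m \<in> {..<n}" "l \<in> {..<n}"
        have e: "W l m = - W m l" using skew lm by blast
        show "?Q x l a * W l m * ?Q x m b = - (W m l * ?Q x l a * ?Q x m b)" by (simp add: e)
      qed
      also have "\<dots> = - (\<Sum>m<n. \<Sum>l<n. W m l * ?Q x l a * ?Q x m b)"
        by (simp add: sum_negf)
      also have "\<dots> = - (\<Sum>l<n. (\<Sum>m<n. W l m * ?Q x m a) * ?Q x l b)"
        unfolding sum_distrib_right by (simp add: mult_ac)
      finally show ?thesis by (simp add: sum.distrib)
    qed
    ultimately show "((\<lambda>s. \<Sum>l<n. ?Q s l a * ?Q s l b) has_real_derivative 0) (at x)" by simp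
   qed
   show ?thesis using DERIV_isconst_all[OF D, of s 0] by simp
  qed
  show ?thesis unfolding orth_def
  proof (intro CollectI conjI mexp_in_mat ext)
    fix a b
    show "mmul n (mtr (?Q s)) (?Q s) a b = idm n a b"
    proof (cases "a < n \<and> b < n")
      case True
      have "(\<Sum>l<n. idm n l a * idm n l b) = (\<Sum>l<n. if l = a then idm n a b else 0)"
        using True by (intro sum.cong refl) (auto simp: idm_def)
      also have "\<dots> = idm n a b" using True by simp
      finally show ?thesis using F[of a b] True by (simp add: mmul_def mtr_def mexp_zero)
    qed (auto simp: mmul_def idm_def)
  qed
qed

lemma mmul_zero_left[simp]: "mmul n (\<lambda>i j. 0) A = (\<lambda>i j. 0)"
  by (intro ext) (simp add: mmul_def)
lemma mmul_zero_right[simp]: "mmul n A (\<lambda>i j. 0) = (\<lambda>i j. 0)"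
  by (intro ext) (simp add: mmul_def)
lemma mtr_zero[simp]: "mtr (\<lambda>i j. 0) = (\<lambda>i j. 0)"
  by (simp add: mtr_def)

lemma mexp_mdv: "mdv n (mexp n W) (mmul n W (mexp n W x)) x"
  unfolding mdv_def using mexp_deriv by (simp add: mmul_def)

lemma curve_tangent:
  assumes V0: "V0 \<in> orth n"
    and skew: "\<forall>i j. i < n \<and> j < n \<longrightarrow> Om j i = - Om i j"
    and Xin: "\<forall>k. in_mat n (X k)"
    and XOm: "\<forall>k i j. 1 \<le> k \<and> k \<le> d \<and> i < n \<and> j < n \<longrightarrow>
       X k i j = mmul n Om (Jm n ns d k) i j + mmul n (Jm n ns d k) (mtr Om) i j"
  shows "conjt n d V0 X \<in> tangent_space (flag n ns d) (conjt n d V0 (Jm n ns d))"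
proof -
  let ?J = "Jm n ns d"
  define W where "W = (\<lambda>s. mmul n V0 (mexp n Om s))"
  define \<gamma> where "\<gamma> = (\<lambda>s. conjt n d (W s) ?J)"
  have Win: "W s \<in> orth n" for s unfolding W_def using V0 mexp_orth[OF skew] by (rule orth_mmul)
  have V0in: "in_mat n V0" using V0 by (simp add: orth_def)
  have W0: "W 0 = V0" unfolding W_def by (simp add: mexp_zero trn_in_mat[OF V0in])
  have dW: "mdv n W (mmul n V0 (mmul n Om (idm n))) 0"
    using mdv_mmul[OF mdv_const[of n V0] mexp_mdv[of n Om 0]] unfolding W_def
    by (simp add: mexp_zero)
  have der: "((\<lambda>s. \<gamma> s k i j) has_real_derivative conjt n d V0 X k i j) (at 0)" for k i j
  proof (cases "1 \<le> k \<and> k \<le> d \<and> i < n \<and> j < n")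
    case False
    then have "\<gamma> s k i j = 0" for s
      by (auto simp: \<gamma>_def conjt_def conjm_def mmul_def)
    moreover have "conjt n d V0 X k i j = 0"
      using False by (auto simp: conjt_def conjm_def mmul_def)
    ultimately show ?thesis by simp
  next
    case True
    have md: "mdv n (\<lambda>s. mmul n (mmul n (W s) (?J k)) (mtr (W s)))
       (\<lambda>i j. mmul n (\<lambda>i j. mmul n (mmul n V0 (mmul n Om (idm n))) (?J k) i j + mmul n (W 0) (\<lambda>i j. 0) i j) (mtr (W 0)) i j
          + mmul n (mmul n (W 0) (?J k)) (mtr (mmul n V0 (mmul n Om (idm n)))) i j) 0"
      using mdv_mmul[OF mdv_mmul[OF dW mdv_const] mdv_mtr[OF dW]] by simp
    moreover have eq: "(\<lambda>i j. mmul n (\<lambda>i j. mmul n (mmul n V0 (mmul n Om (idm n))) (?J k) i j + mmul n (W 0) (\<lambda>i j. 0) i j) (mtr (W 0)) i j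
          + mmul n (mmul n (W 0) (?J k)) (mtr (mmul n V0 (mmul n Om (idm n)))) i j) = conjm n V0 (X k)"
    proof -
      have "conjm n V0 (X k) = mmul n (mmul n V0 (\<lambda>i j. mmul n Om (?J k) i j + mmul n (?J k) (mtr Om) i j)) (mtr V0)"
        unfolding conjm_def using XOm True by (subst mmul_cong_right[of n "X k"]) auto
      then show ?thesis by (simp add: W0 mmul_add_left mmul_add_right mmul_assoc mtr_mmul)
    qed
    ultimately have "mdv n (\<lambda>s. mmul n (mmul n (W s) (?J k)) (mtr (W s))) (conjm n V0 (X k)) 0"
      by (simp only:)
    then show ?thesis using True by (simp add: mdv_def \<gamma>_def conjt_def conjm_def)
  qed
  show ?thesis unfolding tangent_space_def
  proof (intro CollectI exI[of _ \<gamma>] exI[of _ 1] conjI allI impI)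
    show "\<gamma> s \<in> flag n ns d" for s unfolding \<gamma>_def flag_def using Win by blast
    show "\<gamma> 0 = conjt n d V0 ?J" by (simp add: \<gamma>_def W0)
  qed (use der in auto)
qed

lemma trace_conj:
  "(\<Sum>i<n. \<Sum>j<n. conjm n V A i j * D i j) = (\<Sum>a<n. \<Sum>b<n. A a b * mmul n (mtr V) (mmul n D V) a b)"
proof -
  let ?f = "\<lambda>i j a b. V i a * A a b * V j b * D i j"
  have "(\<Sum>i<n. \<Sum>j<n. conjm n V A i j * D i j) = (\<Sum>i<n. \<Sum>j<n. \<Sum>b<n. \<Sum>a<n. ?f i j a b)"
  proof (intro sum.cong refl)
    fix i j assume "i \<in> {..<n}" "j \<in> {..<n}"
    then have "conjm n V A i j = (\<Sum>b<n. (\<Sum>a<n. V i a * A a b) * V j b)"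
      by (simp add: conjm_def mmul_def[of n "mmul n V A"] mtr_def) (intro sum.cong, auto simp: mmul_def)
    then show "conjm n V A i j * D i j = (\<Sum>b<n. \<Sum>a<n. ?f i j a b)"
      by (simp add: sum_distrib_right)
  qed
  also have "\<dots> = (\<Sum>i<n. \<Sum>j<n. \<Sum>a<n. \<Sum>b<n. ?f i j a b)"
    by (intro sum.cong refl sum.swap)
  also have "\<dots> = (\<Sum>i<n. \<Sum>a<n. \<Sum>j<n. \<Sum>b<n. ?f i j a b)"
    by (intro sum.cong refl sum.swap)
  also have "\<dots> = (\<Sum>a<n. \<Sum>i<n. \<Sum>j<n. \<Sum>b<n. ?f i j a b)"
    by (rule sum.swap)
  also have "\<dots> = (\<Sum>a<n. \<Sum>i<n. \<Sum>b<n. \<Sum>j<n. ?f i j a b)"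
    by (intro sum.cong refl sum.swap)
  also have "\<dots> = (\<Sum>a<n. \<Sum>b<n. \<Sum>i<n. \<Sum>j<n. ?f i j a b)"
    by (intro sum.cong refl sum.swap)
  also have "\<dots> = (\<Sum>a<n. \<Sum>b<n. A a b * mmul n (mtr V) (mmul n D V) a b)"
  proof (intro sum.cong refl)
    fix a b assume "a \<in> {..<n}" "b \<in> {..<n}"
    then have "mmul n (mtr V) (mmul n D V) a b = (\<Sum>i<n. V i a * (\<Sum>j<n. D i j * V j b))"
      unfolding mmul_def[of n "mtr V"] by (simp add: mtr_def, intro sum.cong, auto simp: mmul_def)
    then show "(\<Sum>i<n. \<Sum>j<n. ?f i j a b) = A a b * mmul n (mtr V) (mmul n D V) a b"
      by (simp add: sum_distrib_left mult_ac)
  qed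
  finally show ?thesis .
qed

definition SS :: "nat \<Rightarrow> (nat \<Rightarrow> nat) \<Rightarrow> nat \<Rightarrow> mat \<Rightarrow> mat" where
  "SS n ns d L = (\<lambda>i j. \<Sum>l<ns d. L i l * L l j)"

definition XX :: "nat \<Rightarrow> (nat \<Rightarrow> nat) \<Rightarrow> nat \<Rightarrow> mat \<Rightarrow> nat \<Rightarrow> mat" where
  "XX n ns d L k = (\<lambda>i j. if (i \<in> blk n ns d k \<and> j \<in> blk n ns d (d + 1)) \<or> (i \<in> blk n ns d (d + 1) \<and> j \<in> blk n ns d k)
      then - SS n ns d L i j else 0)"

lemma Y_entry: "i < n \<Longrightarrow> j < n \<Longrightarrow>
  mmul n (mmul n L (Jm n ns d k)) L i j = (\<Sum>l<n. L i l * eps n ns d k l * L l j)"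
  by (simp add: mmul_def[of n "mmul n L (Jm n ns d k)"] mmul_J_right)

lemma sum_if_less:
  fixes m n :: nat assumes "m \<le> n" shows "(\<Sum>l<n. if l < m then f l else 0) = (\<Sum>l<m. f l)"
  using assms by (intro sum.mono_neutral_cong_right) auto

lemma entry_zero:
  assumes good: "good n ns d"
    and Ldg: "\<forall>p i j. 1 \<le> p \<and> p \<le> d + 1 \<and> i \<in> blk n ns d p \<and> j \<in> blk n ns d p \<longrightarrow> L i j = 0"
    and ab: "a < n" "b < n"
    and E1: "\<forall>k. 1 \<le> k \<and> k \<le> d \<longrightarrow> (1 + eps n ns d k a * eps n ns d k b) * e k = 0"
    and E2: "\<forall>k l. 1 \<le> k \<and> k \<le> d \<and> 1 \<le> l \<and> l \<le> d \<longrightarrow>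
        e k * eps n ns d l b + eps n ns d k a * e l = e l * eps n ns d k b + eps n ns d l a * e k"
  shows "(\<Sum>k\<in>{1..d}. (mmul n (mmul n L (Jm n ns d k)) L a b - XX n ns d L k a b) * e k) = 0"
proof -
  let ?g = "\<lambda>k. (mmul n (mmul n L (Jm n ns d k)) L a b - XX n ns d L k a b) * e k"
  obtain p where p: "1 \<le> p" "p \<le> d + 1" "a \<in> blk n ns d p" using blk_ex[OF good ab(1)] by blast
  obtain q where q: "1 \<le> q" "q \<le> d + 1" "b \<in> blk n ns d q" using blk_ex[OF good ab(2)] by blast
  have uniq: "\<And>r s x. 1 \<le> r \<Longrightarrow> r \<le> d + 1 \<Longrightarrow> 1 \<le> s \<Longrightarrow> s \<le> d + 1 \<Longrightarrow> x \<in> blk n ns d r \<Longrightarrow> x \<in> blk n ns d s \<Longrightarrow> r = s"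
    using blk_unique[OF good] by blast
  have epsa: "eps n ns d k a = (if k = p then 1 else -1)" if "1 \<le> k" "k \<le> d + 1" for k
  proof -
    have "a \<in> blk n ns d k \<longleftrightarrow> k = p" using uniq[of k p a] p that by blast
    then show ?thesis by (simp add: eps_def)
  qed
  have epsb: "eps n ns d k b = (if k = q then 1 else -1)" if "1 \<le> k" "k \<le> d + 1" for k
  proof -
    have "b \<in> blk n ns d k \<longleftrightarrow> k = q" using uniq[of k q b] q that by blast
    then show ?thesis by (simp add: eps_def)
  qed
  have ez: "e k = 0" if "1 \<le> k" "k \<le> d" "k \<noteq> p" "k \<noteq> q" for k
  proof -
    have "(1 + eps n ns d k a * eps n ns d k b) * e k = 0" using E1 that by blast
    then show ?thesis using epsa[of k] epsb[of k] that by simp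
  qed
  show ?thesis
  proof (cases "p = q")
    case True
    have "e k = 0" if "k \<in> {1..d}" for k
    proof -
      have "(1 + eps n ns d k a * eps n ns d k b) * e k = 0" using E1 that by auto
      moreover have "eps n ns d k a = eps n ns d k b" using epsa[of k] epsb[of k] that True by simp
      ultimately show ?thesis by simp
    qed
    then show ?thesis by simp
  next
    case pq: False
    have La: "L a l = 0" if "l \<in> blk n ns d p" for l using Ldg p that by blast
    have Lb: "L l b = 0" if "l \<in> blk n ns d q" for l using Ldg q that by blast
    have nsn: "ns d < n" using good by (simp add: good_def)
    have lastiff: "x \<in> blk n ns d (d + 1) \<longleftrightarrow> ns d \<le> x \<and> x < n" for x using blk_last[OF good] .
    have epsl: "eps n ns d k l = -1" if "l \<notin> blk n ns d k" for k l using that by (simp add: eps_def)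
    consider "p \<le> d" "q \<le> d" | "p \<le> d" "q = d + 1" | "p = d + 1" "q \<le> d"
      using p q pq by linarith
    then show ?thesis
    proof cases
      case 1
      have "sum ?g {1..d} = sum ?g {p, q}"
        using 1 p q ez by (intro sum.mono_neutral_right) auto
      also have "\<dots> = ?g p + ?g q" using pq by simp
      also have "XX n ns d L p a b = 0"
      proof -
        have "a \<notin> blk n ns d (d + 1)" using uniq[of p "d+1" a] p 1 by auto
        moreover have "b \<notin> blk n ns d (d + 1)" using uniq[of q "d+1" b] q 1 by auto
        ultimately show ?thesis by (simp add: XX_def)
      qed
      also have "XX n ns d L q a b = 0"
      proof -
        have "a \<notin> blk n ns d (d + 1)" using uniq[of p "d+1" a] p 1 by auto
        moreover have "b \<notin> blk n ns d (d + 1)" using uniq[of q "d+1" b] q 1 by auto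
        ultimately show ?thesis by (simp add: XX_def)
      qed
      also have "mmul n (mmul n L (Jm n ns d q)) L a b = mmul n (mmul n L (Jm n ns d p)) L a b"
        unfolding Y_entry[OF ab]
      proof (intro sum.cong refl)
        fix l assume "l \<in> {..<n}"
        show "L a l * eps n ns d q l * L l b = L a l * eps n ns d p l * L l b"
        proof (cases "l \<in> blk n ns d p")
          case True then show ?thesis using La by simp
        next
          case np: False
          show ?thesis
          proof (cases "l \<in> blk n ns d q")
            case True then show ?thesis using Lb by simp
          next
            case False then show ?thesis using np epsl by simp
          qed
        qed
      qed
      also have "e q = - e p"
      proof -
        have "e p * eps n ns d q b + eps n ns d p a * e q = e q * eps n ns d p b + eps n ns d q a * e p"
          using E2 p q 1 by blast
        then show ?thesis using epsa[of p] epsa[of q] epsb[of p] epsb[of q] p q 1 pq by simp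
      qed
      finally show ?thesis by (simp add: algebra_simps)
    next
      case 2
      have "sum ?g {1..d} = sum ?g {p}"
        using 2 p q ez by (intro sum.mono_neutral_right) auto
      moreover have "mmul n (mmul n L (Jm n ns d p)) L a b = XX n ns d L p a b"
      proof -
        have "mmul n (mmul n L (Jm n ns d p)) L a b = (\<Sum>l<n. if l < ns d then - (L a l * L l b) else 0)"
          unfolding Y_entry[OF ab]
        proof (intro sum.cong refl)
          fix l assume l: "l \<in> {..<n}"
          show "L a l * eps n ns d p l * L l b = (if l < ns d then - (L a l * L l b) else 0)"
          proof (cases "l \<in> blk n ns d p")
            case True then show ?thesis using La by simp
          next
            case np: False
            show ?thesis
            proof (cases "l < ns d")
              case True then show ?thesis using np epsl by simp
            next
              case False
              then have "l \<in> blk n ns d q" using 2 lastiff l by auto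
              then show ?thesis using Lb False by simp
            qed
          qed
        qed
        also have "\<dots> = - SS n ns d L a b"
          using nsn by (simp add: sum_if_less SS_def sum_negf)
        also have "\<dots> = XX n ns d L p a b" using p q 2 by (simp add: XX_def)
        finally show ?thesis .
      qed
      ultimately show ?thesis by simp
    next
      case 3
      have "sum ?g {1..d} = sum ?g {q}"
        using 3 p q ez by (intro sum.mono_neutral_right) auto
      moreover have "mmul n (mmul n L (Jm n ns d q)) L a b = XX n ns d L q a b"
      proof -
        have "mmul n (mmul n L (Jm n ns d q)) L a b = (\<Sum>l<n. if l < ns d then - (L a l * L l b) else 0)"
          unfolding Y_entry[OF ab]
        proof (intro sum.cong refl)
          fix l assume l: "l \<in> {..<n}"
          show "L a l * eps n ns d q l * L l b = (if l < ns d then - (L a l * L l b) else 0)"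
          proof (cases "l \<in> blk n ns d q")
            case True then show ?thesis using Lb by simp
          next
            case nq: False
            show ?thesis
            proof (cases "l < ns d")
              case True then show ?thesis using nq epsl by simp
            next
              case False
              then have "l \<in> blk n ns d p" using 3 lastiff l by auto
              then show ?thesis using La False by simp
            qed
          qed
        qed
        also have "\<dots> = - SS n ns d L a b"
          using nsn by (simp add: sum_if_less SS_def sum_negf)
        also have "\<dots> = XX n ns d L q a b" using p q 3 by (simp add: XX_def)
        finally show ?thesis .
      qed
      ultimately show ?thesis by simp
    qed
  qed
qed

lemma blk_lt_any: assumes "good n ns d" "i \<in> blk n ns d k" shows "i < n"
proof (cases "k \<le> d + 1")
  case True show ?thesis by (rule blk_lt[OF assms(1) True assms(2)])
next
  case False then show ?thesis using assms(2) by (simp add: blk_def bd_def)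
qed

theorem lemma3p8:
  fixes n d :: nat and ns :: "nat \<Rightarrow> nat" and V Vd :: "real \<Rightarrow> mat" and t :: real
  assumes d1: "1 \<le> d"
    and n1pos: "0 < ns 1"
    and nsinc: "\<forall>k. 1 \<le> k \<and> k < d \<longrightarrow> ns k < ns (Suc k)"
    and ndn: "ns d < n"
    and Vorth: "\<forall>s. V s \<in> orth n"
    and Vderiv: "\<forall>s i j. i < n \<and> j < n \<longrightarrow> ((\<lambda>s. V s i j) has_real_derivative Vd s i j) (at s)"
    and Ldiag: "\<forall>s p i j. 1 \<le> p \<and> p \<le> d + 1 \<and> i \<in> blk n ns d p \<and> j \<in> blk n ns d p
                  \<longrightarrow> mmul n (mtr (V s)) (Vd s) i j = 0"
  shows "let L = mmul n (mtr (V t)) (Vd t);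
             c = conjt n d (V t) (Jm n ns d);
             T3 = conjt n d (V t) (\<lambda>k. mmul n (mmul n L (Jm n ns d k)) L)
         in \<exists>X :: nat \<Rightarrow> mat.
              (\<forall>k. 1 \<le> k \<and> k \<le> d \<longrightarrow>
                  in_mat n (X k) \<and> (\<forall>i j. X k i j = X k j i) \<and>
                  (\<forall>p q i j. 1 \<le> p \<and> p \<le> d + 1 \<and> 1 \<le> q \<and> q \<le> d + 1 \<and>
                     (p, q) \<noteq> (k, d + 1) \<and> (p, q) \<noteq> (d + 1, k) \<and>
                     i \<in> blk n ns d p \<and> j \<in> blk n ns d q \<longrightarrow> X k i j = 0)) \<and>
              is_orth_proj n d (tangent_space (flag n ns d) c) T3 (conjt n d (V t) X) \<and>
              (\<forall>k i j. 1 \<le> k \<and> k \<le> d \<and> i \<in> blk n ns d k \<and> j \<in> blk n ns d (d + 1) \<longrightarrow>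
                  X k i j = - (\<Sum>l < ns d. L i l * L l j))"
proof -
  have good: "good n ns d" using d1 n1pos nsinc ndn by (simp add: good_def)
  define V0 where "V0 = V t"
  define L where "L = mmul n (mtr V0) (Vd t)"
  let ?J = "Jm n ns d"
  have V0o: "V0 \<in> orth n" using Vorth V0_def by simp
  have Lskew: "L j i = - L i j" if ij: "i < n" "j < n" for i j
  proof -
    have c: "(\<Sum>l<n. V s l i * V s l j) = idm n i j" for s
    proof -
      have "mmul n (mtr (V s)) (V s) i j = idm n i j" using Vorth by (simp add: orth_def)
      then show ?thesis using ij by (simp add: mmul_def mtr_def)
    qed
    have "((\<lambda>s. \<Sum>l<n. V s l i * V s l j) has_real_derivative
        (\<Sum>l<n. Vd t l i * V t l j + V t l i * Vd t l j)) (at t)"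
      using Vderiv ij by (intro DERIV_sum DERIV_mult2) auto
    moreover have "((\<lambda>s. \<Sum>l<n. V s l i * V s l j) has_real_derivative 0) (at t)"
      unfolding c by simp
    ultimately have "(\<Sum>l<n. Vd t l i * V t l j + V t l i * Vd t l j) = 0" by (rule DERIV_unique)
    then show ?thesis using ij
      by (simp add: L_def V0_def mmul_def mtr_def sum.distrib mult.commute eq_neg_iff_add_eq_0 add.commute)
  qed
  have Ldg: "\<forall>p i j. 1 \<le> p \<and> p \<le> d + 1 \<and> i \<in> blk n ns d p \<and> j \<in> blk n ns d p \<longrightarrow> L i j = 0"
    using Ldiag unfolding L_def V0_def by blast
  have nsn: "ns d < n" using ndn .
  have blt: "i < n" if "i \<in> blk n ns d k" for i k using blk_lt_any[OF good that] .
  have lastiff: "x \<in> blk n ns d (d + 1) \<longleftrightarrow> ns d \<le> x \<and> x < n" for x using blk_last[OF good] .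
  have uniq: "\<And>r s x. 1 \<le> r \<Longrightarrow> r \<le> d + 1 \<Longrightarrow> 1 \<le> s \<Longrightarrow> s \<le> d + 1 \<Longrightarrow> x \<in> blk n ns d r \<Longrightarrow> x \<in> blk n ns d s \<Longrightarrow> r = s"
    using blk_unique[OF good] by blast
  have Ssym: "SS n ns d L j i = SS n ns d L i j" if "i < n" "j < n" for i j
    unfolding SS_def
  proof (intro sum.cong refl)
    fix l assume "l \<in> {..<ns d}"
    then have "l < n" using nsn by simp
    then have "L j l = - L l j" "L l i = - L i l" using Lskew that by blast+
    then show "L j l * L l i = L i l * L l j" by simp
  qed
  define X where "X = XX n ns d L"
  define Om where "Om = (\<lambda>i j. if i < ns d \<and> ns d \<le> j \<and> j < n then SS n ns d L i j / 2
      else if ns d \<le> i \<and> i < n \<and> j < ns d then - SS n ns d L i j / 2 else 0)"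
  have Xin: "in_mat n (X k)" for k
    unfolding in_mat_def
  proof (intro allI impI)
    fix i j assume h: "n \<le> i \<or> n \<le> j"
    show "X k i j = 0"
      using blt[of i k] blt[of j k] blt[of i "d+1"] blt[of j "d+1"] h by (auto simp: X_def XX_def)
  qed
  have Xsym: "X k j i = X k i j" for k i j
  proof (cases "(i \<in> blk n ns d k \<and> j \<in> blk n ns d (d + 1)) \<or> (i \<in> blk n ns d (d + 1) \<and> j \<in> blk n ns d k)")
    case True
    then have "i < n" "j < n" using blt[of i k] blt[of j k] blt[of i "d+1"] blt[of j "d+1"] by auto
    then have "SS n ns d L j i = SS n ns d L i j" by (rule Ssym)
    then show ?thesis using True by (auto simp: X_def XX_def)
  next
    case False
    then show ?thesis by (auto simp: X_def XX_def)
  qed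
  have Xblk: "X k i j = 0" if "1 \<le> k" "k \<le> d" "1 \<le> p" "p \<le> d + 1" "1 \<le> q" "q \<le> d + 1"
     "(p, q) \<noteq> (k, d + 1)" "(p, q) \<noteq> (d + 1, k)" "i \<in> blk n ns d p" "j \<in> blk n ns d q" for k p q i j
  proof -
    have "\<not> (i \<in> blk n ns d k \<and> j \<in> blk n ns d (d + 1))"
      using uniq[of p k i] uniq[of q "d+1" j] that by auto
    moreover have "\<not> (i \<in> blk n ns d (d + 1) \<and> j \<in> blk n ns d k)"
      using uniq[of p "d+1" i] uniq[of q k j] that by auto
    ultimately show ?thesis unfolding X_def XX_def by auto
  qed
  have Omskew: "\<forall>i j. i < n \<and> j < n \<longrightarrow> Om j i = - Om i j"
  proof (intro allI impI)
    fix i j assume "i < n \<and> j < n"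
    then have "SS n ns d L j i = SS n ns d L i j" using Ssym by blast
    then show "Om j i = - Om i j" by (auto simp: Om_def)
  qed
  have XOm: "\<forall>k i j. 1 \<le> k \<and> k \<le> d \<and> i < n \<and> j < n \<longrightarrow>
       X k i j = mmul n Om (?J k) i j + mmul n (?J k) (mtr Om) i j"
  proof (intro allI impI)
    fix k i j assume h: "1 \<le> k \<and> k \<le> d \<and> i < n \<and> j < n"
    have lowk: "x \<in> blk n ns d k \<Longrightarrow> x < ns d" for x using blk_low[OF good] h by blast
    have R: "mmul n Om (?J k) i j + mmul n (?J k) (mtr Om) i j = Om i j * eps n ns d k j - eps n ns d k i * Om i j"
    proof -
      have "Om j i = - Om i j" using Omskew h by blast
      then show ?thesis using h by (simp add: mmul_J_left mmul_J_right mtr_def)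
    qed
    show "X k i j = mmul n Om (?J k) i j + mmul n (?J k) (mtr Om) i j"
      unfolding R
      using h lowk[of i] lowk[of j] lastiff[of i] lastiff[of j]
      by (auto simp: X_def XX_def Om_def eps_def)
  qed
  have Ptan: "conjt n d V0 X \<in> tangent_space (flag n ns d) (conjt n d V0 ?J)"
    using curve_tangent[OF V0o Omskew _ XOm] Xin by blast
  have orthog: "finner n d (\<lambda>k i j. conjt n d V0 (\<lambda>k. mmul n (mmul n L (?J k)) L) k i j - conjt n d V0 X k i j) D = 0"
    if D: "D \<in> tangent_space (flag n ns d) (conjt n d V0 ?J)" for D
  proof -
    define E where "E = (\<lambda>k. mmul n (mtr V0) (mmul n (D k) V0))"
    let ?Y = "\<lambda>k. mmul n (mmul n L (?J k)) L"
    have "finner n d (\<lambda>k i j. conjt n d V0 ?Y k i j - conjt n d V0 X k i j) D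
        = (\<Sum>k\<in>{1..d}. \<Sum>a<n. \<Sum>b<n. (?Y k a b - X k a b) * E k a b)"
      unfolding finner_def
    proof (rule sum.cong[OF refl])
      fix k assume k: "k \<in> {1..d}"
      have "(\<Sum>i<n. \<Sum>j<n. (conjt n d V0 ?Y k i j - conjt n d V0 X k i j) * D k i j)
          = (\<Sum>i<n. \<Sum>j<n. conjm n V0 (?Y k) i j * D k i j) - (\<Sum>i<n. \<Sum>j<n. conjm n V0 (X k) i j * D k i j)"
        using k by (simp add: conjt_def left_diff_distrib sum_subtractf)
      also have "\<dots> = (\<Sum>a<n. \<Sum>b<n. ?Y k a b * E k a b) - (\<Sum>a<n. \<Sum>b<n. X k a b * E k a b)"
        unfolding trace_conj E_def ..
      also have "\<dots> = (\<Sum>a<n. \<Sum>b<n. (?Y k a b - X k a b) * E k a b)"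
        by (simp add: left_diff_distrib sum_subtractf)
      finally show "(\<Sum>i<n. \<Sum>j<n. (conjt n d V0 ?Y k i j - conjt n d V0 X k i j) * D k i j)
          = (\<Sum>a<n. \<Sum>b<n. (?Y k a b - X k a b) * E k a b)" .
    qed
    also have "\<dots> = (\<Sum>a<n. \<Sum>k\<in>{1..d}. \<Sum>b<n. (?Y k a b - X k a b) * E k a b)"
      by (rule sum.swap)
    also have "\<dots> = (\<Sum>a<n. \<Sum>b<n. \<Sum>k\<in>{1..d}. (?Y k a b - X k a b) * E k a b)"
      by (intro sum.cong refl sum.swap)
    also have "\<dots> = 0"
    proof (rule sum.neutral, rule ballI, rule sum.neutral, rule ballI)
      fix a b assume a: "a \<in> {..<n}" and b: "b \<in> {..<n}"
      show "(\<Sum>k\<in>{1..d}. (?Y k a b - X k a b) * E k a b) = 0"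
        unfolding X_def
      proof (rule entry_zero[OF good Ldg])
        show "a < n" "b < n" using a b by auto
        show "\<forall>k. 1 \<le> k \<and> k \<le> d \<longrightarrow> (1 + eps n ns d k a * eps n ns d k b) * E k a b = 0"
          using tangent_rel(1)[OF V0o D] a b unfolding E_def by auto
        show "\<forall>k l. 1 \<le> k \<and> k \<le> d \<and> 1 \<le> l \<and> l \<le> d \<longrightarrow>
          E k a b * eps n ns d l b + eps n ns d k a * E l a b = E l a b * eps n ns d k b + eps n ns d l a * E k a b"
          using tangent_rel(2)[OF V0o D] a b unfolding E_def by auto
      qed
    qed
    finally show ?thesis .
  qed
  show ?thesis unfolding Let_def V0_def[symmetric] L_def[symmetric]
  proof (intro exI[of _ X] conjI allI impI)
    fix k assume k: "1 \<le> k \<and> k \<le> d"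
    show "in_mat n (X k)" by (rule Xin)
    show "\<And>i j. X k i j = X k j i" using Xsym by simp
    show "\<And>p q i j. 1 \<le> p \<and> p \<le> d + 1 \<and> 1 \<le> q \<and> q \<le> d + 1 \<and> (p, q) \<noteq> (k, d + 1) \<and> (p, q) \<noteq> (d + 1, k) \<and>
        i \<in> blk n ns d p \<and> j \<in> blk n ns d q \<Longrightarrow> X k i j = 0"
      using Xblk k by blast
  next
    show "is_orth_proj n d (tangent_space (flag n ns d) (conjt n d V0 ?J))
       (conjt n d V0 (\<lambda>k. mmul n (mmul n L (?J k)) L)) (conjt n d V0 X)"
      unfolding is_orth_proj_def using Ptan orthog by blast
  next
    fix k i j assume "1 \<le> k \<and> k \<le> d \<and> i \<in> blk n ns d k \<and> j \<in> blk n ns d (d + 1)"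
    then show "X k i j = - (\<Sum>l<ns d. L i l * L l j)" by (simp add: X_def XX_def SS_def)
  qed
qed

end
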